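(* Let $G=(V,E)$ be a hypergraph, $k\ge2$ an integer, and $(Y_1,\dots,Y_p,W,Z)$ a partition of $V$ for some integer $p\ge 2k-2$. Then there exist distinct $i_1,\dots,i_{k-1}\in[p]$ such that \[2\,\mathrm{cost}\Bigl(Y_{i_1},\dots,Y_{i_{k-1}},V\setminus\textstyle\bigcup_{j=1}^{k-1}Y_{i_j}\Bigr)\le\mathrm{cost}(Y_1,\dots,Y_p,W,Z)+\alpha(Y_1,\dots,Y_p,W,Z)+\beta(Y_1,\dots,Y_p,Z).\]
   Context: A hypergraph $G=(V,E)$ has finite vertex set $V$ and finite multiset $E$ of hyperedges (subsets of $V$). For a partition of $V$ into non-empty parts, $\mathrm{cost}$ of the partition is the number of hyperedges meeting at least two parts. For a partition $(Y_1,\dots,Y_p,W,Z)$ of $V$: $\alpha(Y_1,\dots,Y_p,W,Z)$ is the number of hyperedges meeting $Z$ and meeting at least two of the sets $Y_1,\dots,Y_p,W$; $\beta(Y_1,\dots,Y_p,Z)$ is the number of hyperedges disjoint from $Z$ meeting at least two of $Y_1,\dots,Y_p$. *)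

theory Defs
  imports Main "HOL-Library.Multiset"
begin

definition is_partition :: "'a set \<Rightarrow> 'a set list \<Rightarrow> bool" where
  "is_partition V P \<longleftrightarrow>
     (\<forall>a < length P. P ! a \<noteq> {}) \<and>
     (\<forall>a < length P. \<forall>b < length P. a \<noteq> b \<longrightarrow> P ! a \<inter> P ! b = {}) \<and>
     \<Union>(set P) = V"

definition meets_two :: "'a set \<Rightarrow> 'a set list \<Rightarrow> bool" where
  "meets_two e P \<longleftrightarrow>
     (\<exists>a < length P. \<exists>b < length P. a \<noteq> b \<and> e \<inter> P ! a \<noteq> {} \<and> e \<inter> P ! b \<noteq> {})"

definition cost :: "'a set multiset \<Rightarrow> 'a set list \<Rightarrow> nat" where
  "cost E P = size (filter_mset (\<lambda>e. meets_two e P) E)"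

definition alpha :: "'a set multiset \<Rightarrow> 'a set list \<Rightarrow> 'a set \<Rightarrow> 'a set \<Rightarrow> nat" where
  "alpha E Ys W Z = size (filter_mset (\<lambda>e. e \<inter> Z \<noteq> {} \<and> meets_two e (Ys @ [W])) E)"

definition beta :: "'a set multiset \<Rightarrow> 'a set list \<Rightarrow> 'a set \<Rightarrow> nat" where
  "beta E Ys Z = size (filter_mset (\<lambda>e. e \<inter> Z = {} \<and> meets_two e Ys) E)"

end

theory Submission
  imports Defs
begin

lemma size_filter_sum3:
  assumes "\<forall>e\<in>#E. of_bool (P e) + of_bool (Q e) \<le> (of_bool (R1 e) + of_bool (R2 e) + of_bool (R3 e) :: nat)"
  shows "size (filter_mset P E) + size (filter_mset Q E)
         \<le> size (filter_mset R1 E) + size (filter_mset R2 E) + size (filter_mset R3 E)"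
  using assms by (induction E) (auto split: if_splits)

lemma cut_imp:
  fixes Y :: "nat \<Rightarrow> 'a set" and i :: "nat \<Rightarrow> nat"
  assumes inj: "inj_on i {1..m}" and img: "i ` {1..m} \<subseteq> S"
    and disj: "\<And>a b. a \<in> S \<Longrightarrow> b \<in> S \<Longrightarrow> a \<noteq> b \<Longrightarrow> Y a \<inter> Y b = {}"
    and mt: "meets_two e (map (\<lambda>j. Y (i j)) [1..<Suc m] @ [V - (\<Union>j\<in>{1..m}. Y (i j))])"
  shows "\<exists>j\<in>{1..m}. e \<inter> Y (i j) \<noteq> {} \<and> \<not> e \<subseteq> Y (i j)"
proof -
  let ?L = "map (\<lambda>j. Y (i j)) [1..<Suc m] @ [V - (\<Union>j\<in>{1..m}. Y (i j))]"
  have len: "length ?L = Suc m" by simp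
  have nthL: "a < m \<Longrightarrow> ?L ! a = Y (i (Suc a))" for a
    by (simp add: nth_append, intro impI, subgoal_tac "Suc a = m", simp, linarith)
  have nthL2: "?L ! m = V - (\<Union>j\<in>{1..m}. Y (i j))" by (simp add: nth_append)
  from mt obtain a b where ab: "a < Suc m" "b < Suc m" "a \<noteq> b" "e \<inter> ?L ! a \<noteq> {}" "e \<inter> ?L ! b \<noteq> {}"
    unfolding meets_two_def len by blast
  have key: "\<exists>j\<in>{1..m}. e \<inter> Y (i j) \<noteq> {} \<and> \<not> e \<subseteq> Y (i j)"
    if h: "a < m" "b < Suc m" "a \<noteq> b" "e \<inter> ?L ! a \<noteq> {}" "e \<inter> ?L ! b \<noteq> {}" for a b
  proof (intro bexI[of _ "Suc a"] conjI)
    show "Suc a \<in> {1..m}" using h by auto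
    show "e \<inter> Y (i (Suc a)) \<noteq> {}" using h nthL by auto
    show "\<not> e \<subseteq> Y (i (Suc a))"
    proof
      assume sub: "e \<subseteq> Y (i (Suc a))"
      show False
      proof (cases "b < m")
        case True
        have "i (Suc a) \<noteq> i (Suc b)" using inj h(1,3) True by (auto dest: inj_onD)
        moreover have "Suc a \<in> {1..m}" "Suc b \<in> {1..m}" using h(1) True by auto
        then have "i (Suc a) \<in> S" "i (Suc b) \<in> S" using img by blast+
        ultimately have "Y (i (Suc a)) \<inter> Y (i (Suc b)) = {}" using disj by blast
        then show False using sub h(5) nthL[OF True] by auto
      next
        case False
        then have "b = m" using h by simp
        have "Y (i (Suc a)) \<subseteq> (\<Union>j\<in>{1..m}. Y (i j))" using h by auto
        then show False using sub h(5) nthL2 \<open>b = m\<close> by auto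
      qed
    qed
  qed
  show ?thesis
  proof (cases "a < m")
    case True then show ?thesis using key ab by blast
  next
    case False
    then have "b < m" using ab by auto
    then show ?thesis using key[of b a] ab by auto
  qed
qed

theorem lemma3p5:
  fixes V :: "'a set" and E :: "'a set multiset"
    and Y :: "nat \<Rightarrow> 'a set" and W Z :: "'a set" and k p :: nat
  assumes "finite V"
    and "\<forall>e \<in># E. e \<subseteq> V"
    and "k \<ge> 2"
    and "p \<ge> 2 * k - 2"
    and "is_partition V (map Y [1..<p+1] @ [W, Z])"
  shows "\<exists>i :: nat \<Rightarrow> nat. inj_on i {1..k-1} \<and> i ` {1..k-1} \<subseteq> {1..p} \<and>
           2 * cost E (map (\<lambda>j. Y (i j)) [1..<k] @ [V - (\<Union>j\<in>{1..k-1}. Y (i j))])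
             \<le> cost E (map Y [1..<p+1] @ [W, Z])
               + alpha E (map Y [1..<p+1]) W Z + beta E (map Y [1..<p+1]) Z"
proof -
  define m where "m = k - 1"
  have km: "k = Suc m" using assms(3) m_def by simp
  have pm: "2 * m \<le> p" using assms(4) m_def by simp
  let ?P = "map Y [1..<p+1] @ [W, Z]"
  have lenP: "length ?P = p + 2" by simp
  have nthP: "a < p \<Longrightarrow> ?P ! a = Y (Suc a)" for a
    by (simp add: nth_append, intro impI, subgoal_tac "Suc a = p", simp, linarith)
  have nthW: "?P ! p = W" by (simp add: nth_append)
  have nthZ: "?P ! Suc p = Z" by (simp add: nth_append)
  have pdisj: "\<And>a b. a < p + 2 \<Longrightarrow> b < p + 2 \<Longrightarrow> a \<noteq> b \<Longrightarrow> ?P ! a \<inter> ?P ! b = {}"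
    using assms(5) unfolding is_partition_def lenP by blast
  have cover: "\<Union>(set ?P) = V" using assms(5) unfolding is_partition_def by blast
  have disj: "Y a \<inter> Y b = {}" if "a \<in> {1..p}" "b \<in> {1..p}" "a \<noteq> b" for a b
  proof -
    have "?P ! (a - 1) \<inter> ?P ! (b - 1) = {}" using that by (intro pdisj) auto
    moreover have "?P ! (a - 1) = Y a" "?P ! (b - 1) = Y b" using that nthP[of "a-1"] nthP[of "b-1"] by auto
    ultimately show ?thesis by simp
  qed
  have origcut: "meets_two e ?P" if oc: "e \<subseteq> V" "j \<in> {1..p}" "e \<inter> Y j \<noteq> {}" "\<not> e \<subseteq> Y j" for e j
  proof -
    obtain x where x: "x \<in> e" "x \<notin> Y j" using oc(4) by blast
    then have "x \<in> \<Union>(set ?P)" using that cover by auto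
    then obtain c where c: "c < p + 2" "x \<in> ?P ! c"
      by (metis UnionE in_set_conv_nth lenP)
    have pj: "?P ! (j - 1) = Y j" using that nthP[of "j-1"] by auto
    have "c \<noteq> j - 1" using c x pj by auto
    moreover have "j - 1 < p + 2" using that by auto
    ultimately show ?thesis unfolding meets_two_def lenP using c x pj that(3) by blast
  qed
  have two: "(e \<inter> Z \<noteq> {} \<and> meets_two e (map Y [1..<p+1] @ [W])) \<or> (e \<inter> Z = {} \<and> meets_two e (map Y [1..<p+1]))"
    if "a \<in> {1..p}" "b \<in> {1..p}" "a \<noteq> b" "e \<inter> Y a \<noteq> {}" "e \<inter> Y b \<noteq> {}" for e a b
  proof -
    have n1: "(map Y [1..<p+1] @ [W]) ! (c - 1) = Y c" if "c \<in> {1..p}" for c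
      using that by (auto simp: nth_append simp del: upt_Suc)
    have n2: "(map Y [1..<p+1]) ! (c - 1) = Y c" if "c \<in> {1..p}" for c
      using that by (auto simp del: upt_Suc)
    have l: "a - 1 < length (map Y [1..<p+1] @ [W])" "b - 1 < length (map Y [1..<p+1] @ [W])"
      "a - 1 < length (map Y [1..<p+1])" "b - 1 < length (map Y [1..<p+1])" "a - 1 \<noteq> b - 1"
      using that(1-3) by auto
    have "meets_two e (map Y [1..<p+1] @ [W])"
      unfolding meets_two_def using l n1[OF that(1)] n1[OF that(2)] that(4,5) by metis
    moreover have "meets_two e (map Y [1..<p+1])"
      unfolding meets_two_def using l n2[OF that(1)] n2[OF that(2)] that(4,5) by metis
    ultimately show ?thesis by blast
  qed
  define iA :: "nat \<Rightarrow> nat" where "iA = (\<lambda>j. j)"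
  define iB :: "nat \<Rightarrow> nat" where "iB = (\<lambda>j. j + m)"
  have injA: "inj_on iA {1..m}" unfolding iA_def by simp
  have injB: "inj_on iB {1..m}" unfolding iB_def by (simp add: inj_on_def)
  have imgA: "iA ` {1..m} \<subseteq> {1..p}" unfolding iA_def using pm by auto
  have imgB: "iB ` {1..m} \<subseteq> {1..p}" unfolding iB_def using pm by auto
  define LA where "LA = map (\<lambda>j. Y (iA j)) [1..<Suc m] @ [V - (\<Union>j\<in>{1..m}. Y (iA j))]"
  define LB where "LB = map (\<lambda>j. Y (iB j)) [1..<Suc m] @ [V - (\<Union>j\<in>{1..m}. Y (iB j))]"
  have edge: "of_bool (meets_two e LA) + of_bool (meets_two e LB)
     \<le> (of_bool (meets_two e ?P) + of_bool (e \<inter> Z \<noteq> {} \<and> meets_two e (map Y [1..<p+1] @ [W]))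
        + of_bool (e \<inter> Z = {} \<and> meets_two e (map Y [1..<p+1])) :: nat)" if eV: "e \<subseteq> V" for e
  proof -
    have cA: "\<exists>j\<in>{1..m}. e \<inter> Y (iA j) \<noteq> {} \<and> \<not> e \<subseteq> Y (iA j)" if "meets_two e LA"
      by (rule cut_imp[OF injA imgA _ that[unfolded LA_def]]) (rule disj)
    have cB: "\<exists>j\<in>{1..m}. e \<inter> Y (iB j) \<noteq> {} \<and> \<not> e \<subseteq> Y (iB j)" if "meets_two e LB"
      by (rule cut_imp[OF injB imgB _ that[unfolded LB_def]]) (rule disj)
    have oA: "meets_two e ?P" if "meets_two e LA"
      using cA[OF that] imgA origcut[OF eV] by blast
    have oB: "meets_two e ?P" if "meets_two e LB"
      using cB[OF that] imgB origcut[OF eV] by blast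
    have tw: "(e \<inter> Z \<noteq> {} \<and> meets_two e (map Y [1..<p+1] @ [W])) \<or> (e \<inter> Z = {} \<and> meets_two e (map Y [1..<p+1]))"
      if tt: "meets_two e LA" "meets_two e LB"
    proof -
      obtain a where a: "a \<in> {1..m}" "e \<inter> Y (iA a) \<noteq> {}" using cA[OF tt(1)] by blast
      obtain b where b: "b \<in> {1..m}" "e \<inter> Y (iB b) \<noteq> {}" using cB[OF tt(2)] by blast
      have "iA a \<noteq> iB b" using a b unfolding iA_def iB_def by auto
      then show ?thesis using two[of "iA a" "iB b" e] a b imgA imgB by blast
    qed
    show ?thesis using oA oB tw by (cases "meets_two e LA"; cases "meets_two e LB") (auto simp del: upt_Suc)
  qed
  have sum: "cost E LA + cost E LB \<le> cost E ?P + alpha E (map Y [1..<p+1]) W Z + beta E (map Y [1..<p+1]) Z"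
    unfolding cost_def alpha_def beta_def
    by (rule size_filter_sum3) (use edge assms(2) in blast)
  show ?thesis
  proof (cases "cost E LA \<le> cost E LB")
    case True
    show ?thesis
      by (rule exI[of _ iA]) (use injA imgA True sum in \<open>simp add: km LA_def\<close>)
  next
    case False
    show ?thesis
      by (rule exI[of _ iB]) (use injB imgB False sum in \<open>simp add: km LB_def\<close>)
  qed
qed

end
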